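(* For every $t\in(0,1)$ and every nonnegative integer $n$, $$\sum_{k\ge0} B^{n-k}_k(t) = \frac{1-(-t)^{n+1}}{1+t}.$$
   Context: The Bernstein polynomials are $B^m_k(t) = \binom{m}{k} t^k (1-t)^{m-k}$ for integers $0\le k\le m$, and $B^m_k(t)=0$ for $m<k$. *)

theory Defs
  imports "HOL-Analysis.Analysis"
begin

text \<open>Bernstein polynomial B^m_k(t) = (m choose k) t^k (1-t)^(m-k) for 0 \<le> k \<le> m,
  and 0 when m < k (m is an integer so that negative upper indices are allowed).\<close>
definition bernstein :: "int \<Rightarrow> nat \<Rightarrow> real \<Rightarrow> real" where
  "bernstein m k t =
     (if int k \<le> m then real (nat m choose k) * t ^ k * (1 - t) ^ (nat m - k) else 0)"

end

theory Submission
  imports Defs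
begin

definition bb :: "real \<Rightarrow> nat \<Rightarrow> nat \<Rightarrow> real" where
  "bb t m k = real (m choose k) * t ^ k * (1 - t) ^ (m - k)"

lemma bb_zero: "m < k \<Longrightarrow> bb t m k = 0"
  by (simp add: bb_def)

lemma bb_0: "bb t (Suc m) 0 = (1 - t) * bb t m 0"
  by (simp add: bb_def)

lemma bb_pascal: "bb t (Suc m) (Suc k) = (1 - t) * bb t m (Suc k) + t * bb t m k"
proof (cases "k < m")
  case True
  then have e: "Suc m - Suc k = Suc (m - Suc k)" "m - k = Suc (m - Suc k)" by auto
  show ?thesis unfolding bb_def e by (simp add: algebra_simps)
next
  case False
  then consider "k = m" | "m < k" by linarith
  then show ?thesis
  proof cases
    case 1 then show ?thesis by (simp add: bb_def)
  next
    case 2 then show ?thesis by (simp add: bb_zero)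
  qed
qed

definition SS :: "real \<Rightarrow> nat \<Rightarrow> real" where
  "SS t n = (\<Sum>k<n+1. bb t (n - k) k)"

lemma SS_ext: "N \<ge> n + 1 \<Longrightarrow> SS t n = (\<Sum>k<N. bb t (n - k) k)"
proof (induction N rule: dec_induct)
  case base then show ?case by (simp add: SS_def)
next
  case (step N)
  then have "bb t (n - N) N = 0" by (intro bb_zero) auto
  then show ?case using step by simp
qed

lemma SS_rec: "SS t (n+2) = (1 - t) * SS t (n+1) + t * SS t n"
proof -
  have p: "bb t (n + 1 - j) (Suc j) = (1 - t) * bb t (n - j) (Suc j) + t * bb t (n - j) j" for j
  proof (cases "j \<le> n")
    case True
    then have "n + 1 - j = Suc (n - j)" by auto
    then show ?thesis using bb_pascal by simp
  next
    case False
    then show ?thesis by (simp add: bb_zero)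
  qed
  have "SS t (n+2) = (\<Sum>k<Suc (n+2). bb t (n + 2 - k) k)" by (simp add: SS_def)
  also have "\<dots> = bb t (n+2) 0 + (\<Sum>j<n+2. bb t (n + 1 - j) (Suc j))"
    by (subst sum.lessThan_Suc_shift) simp
  also have "\<dots> = (1 - t) * (bb t (n+1) 0 + (\<Sum>j<n+2. bb t (n - j) (Suc j)))
        + t * (\<Sum>j<n+2. bb t (n - j) j)"
  proof -
    have "(\<Sum>j<n+2. bb t (n + 1 - j) (Suc j)) = (\<Sum>j<n+2. (1 - t) * bb t (n - j) (Suc j) + t * bb t (n - j) j)"
      using p by simp
    also have "\<dots> = (1 - t) * (\<Sum>j<n+2. bb t (n - j) (Suc j)) + t * (\<Sum>j<n+2. bb t (n - j) j)"
      by (simp only: sum.distrib sum_distrib_left)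
    finally show ?thesis using bb_0[of t "n+1"] by (simp add: algebra_simps)
  qed
  also have "bb t (n+1) 0 + (\<Sum>j<n+2. bb t (n - j) (Suc j)) = (\<Sum>k<Suc (n+2). bb t (n + 1 - k) k)"
    by (subst sum.lessThan_Suc_shift) simp
  also have "\<dots> = SS t (n+1)" by (rule SS_ext[symmetric]) simp
  also have "(\<Sum>j<n+2. bb t (n - j) j) = SS t n" by (rule SS_ext[symmetric]) simp
  finally show ?thesis .
qed

lemma SS_closed:
  assumes "0 < t"
  shows "SS t n = (1 - (- t) ^ (n + 1)) / (1 + t)"
proof (induction n rule: less_induct)
  case (less n)
  have pos: "1 + t \<noteq> 0" using assms by simp
  consider "n = 0" | "n = 1" | m where "n = m + 2" by (metis add_2_eq_Suc' not0_implies_Suc One_nat_def)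
  then show ?case
  proof cases
    case 1 then show ?thesis using pos by (simp add: SS_def bb_def)
  next
    case 2
    have "SS t 1 = 1 - t" by (simp add: SS_def bb_def)
    moreover have "(1 - (- t) ^ (1 + 1)) / (1 + t) = 1 - t" using pos
    proof -
      have "1 - (- t) ^ (1 + 1) = (1 - t) * (1 + t)" by (simp add: algebra_simps power2_eq_square)
      then show ?thesis using pos by simp
    qed
    ultimately show ?thesis using 2 by metis
  next
    case 3
    have a: "SS t (m+1) = (1 - (- t) ^ (m + 2)) / (1 + t)" using less[of "m+1"] 3 by simp
    have b: "SS t m = (1 - (- t) ^ (m + 1)) / (1 + t)" using less[of m] 3 by simp
    define x where "x = (- t) ^ (m + 1)"
    have e2: "(- t) ^ (m + 2) = - t * x" by (simp add: x_def)
    have e3: "(- t) ^ (m + 2 + 1) = t * t * x" by (simp add: x_def)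
    have "(1 - t) * ((1 + t * x) / (1 + t)) + t * ((1 - x) / (1 + t)) = (1 - t * t * x) / (1 + t)"
    proof -
      have "(1 - t) * ((1 + t * x) / (1 + t)) + t * ((1 - x) / (1 + t))
          = ((1 - t) * (1 + t * x) + t * (1 - x)) / (1 + t)"
        by (metis times_divide_eq_right add_divide_distrib)
      also have "(1 - t) * (1 + t * x) + t * (1 - x) = 1 - t * t * x" by (simp add: algebra_simps)
      finally show ?thesis .
    qed
    then show ?thesis unfolding 3 SS_rec a b e2 e3 x_def[symmetric] by simp
  qed
qed

theorem mainTheorem18:
  fixes t :: real and n :: nat
  assumes "0 < t" and "t < 1"
  shows "infsum (\<lambda>k::nat. bernstein (int n - int k) k t) UNIV
           = (1 - (- t) ^ (n + 1)) / (1 + t)"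
proof -
  have eq: "bernstein (int n - int k) k t = bb t (n - k) k" for k
  proof (cases "int k \<le> int n - int k")
    case True
    then have "nat (int n - int k) = n - k" by auto
    then show ?thesis using True by (simp add: bernstein_def bb_def)
  next
    case False
    then show ?thesis by (simp add: bernstein_def bb_zero)
  qed
  have "infsum (\<lambda>k::nat. bernstein (int n - int k) k t) UNIV
      = infsum (\<lambda>k::nat. bernstein (int n - int k) k t) {..<n+1}"
    by (rule infsum_cong_neutral) (auto simp: eq bb_zero)
  also have "\<dots> = SS t n" by (simp add: SS_def eq)
  finally show ?thesis using SS_closed[OF assms(1)] by simp
qed

end
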